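(* Let $K$ be a kernel on $\Omega\subset\mathbb{R}^d$ and either $K$ positive definite and $\lambda>0$, or $K$ strictly positive definite and $\lambda\ge0$. Let $X_n=\{x_1,\dots,x_n\}\subset\Omega$ be pairwise distinct. Then for all $x\in\Omega$ $$P_n^\lambda(x)^2=\|K(\cdot,x)-s_n^\lambda(K(\cdot,x))\|_{\mathcal{H}}^2=K(x,x)-2\sum_{k=1}^n v_k(x)^2+\sum_{k,l=1}^n v_k(x)v_l(x)(v_k,v_l)_{\mathcal{H}} .$$
   Context: A kernel is positive definite if symmetric with positive semidefinite kernel matrices on pairwise distinct points (strictly: positive definite matrices). $\mathcal{H}=\mathcal{H}_K(\Omega)$ is the native space (reproducing kernel Hilbert space) of $K$. With $A=(K(x_i,x_j))_{i,j=1}^n$, the regularized interpolant of $f:\Omega\to\mathbb{R}$ is $s_n^\lambda(f):=\sum_{j=1}^n\alpha_jK(\cdot,x_j)$ with $(A+\lambda I)\alpha=(f(x_1),\dots,f(x_n))^T$. The regularized power function is $P_n^\lambda(x):=\sup_{f\in\mathcal{H},f\ne0}|f(x)-s_n^\lambda(f)(x)|/\|f\|_{\mathcal{H}}$. Let $A+\lambda I=LL^T$ be the Cholesky factorization, $(\beta_{jk}):=L^{-T}$, and $v_k:=\sum_{j=1}^n\beta_{jk}K(\cdot,x_j)$, $1\le k\le n$. *)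

theory Defs
  imports "HOL-Analysis.Analysis" "Jordan_Normal_Form.Matrix"
begin

text \<open>Kernels on a domain Omega (kernel values outside Omega are irrelevant).\<close>

definition pd_kernel :: "'a set \<Rightarrow> ('a \<Rightarrow> 'a \<Rightarrow> real) \<Rightarrow> bool" where
  "pd_kernel \<Omega> K \<longleftrightarrow> (\<forall>x\<in>\<Omega>. \<forall>y\<in>\<Omega>. K x y = K y x) \<and>
     (\<forall>n (xs :: nat \<Rightarrow> 'a). (\<forall>i<n. xs i \<in> \<Omega>) \<and> inj_on xs {..<n} \<longrightarrow>
        (\<forall>c :: nat \<Rightarrow> real. (\<Sum>i<n. \<Sum>j<n. c i * c j * K (xs i) (xs j)) \<ge> 0))"

definition spd_kernel :: "'a set \<Rightarrow> ('a \<Rightarrow> 'a \<Rightarrow> real) \<Rightarrow> bool" where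
  "spd_kernel \<Omega> K \<longleftrightarrow> (\<forall>x\<in>\<Omega>. \<forall>y\<in>\<Omega>. K x y = K y x) \<and>
     (\<forall>n (xs :: nat \<Rightarrow> 'a). (\<forall>i<n. xs i \<in> \<Omega>) \<and> inj_on xs {..<n} \<longrightarrow>
        (\<forall>c :: nat \<Rightarrow> real. (\<exists>i<n. c i \<noteq> 0) \<longrightarrow>
            (\<Sum>i<n. \<Sum>j<n. c i * c j * K (xs i) (xs j)) > 0))"

definition kfun :: "'a set \<Rightarrow> ('a \<Rightarrow> 'a \<Rightarrow> real) \<Rightarrow> 'a \<Rightarrow> ('a \<Rightarrow> real)" where
  "kfun \<Omega> K x = (\<lambda>y. if y \<in> \<Omega> then K y x else 0)"

definition hnorm :: "(('a \<Rightarrow> real) \<Rightarrow> ('a \<Rightarrow> real) \<Rightarrow> real) \<Rightarrow> ('a \<Rightarrow> real) \<Rightarrow> real" where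
  "hnorm ip f = sqrt (ip f f)"

definition native_space ::
  "'a set \<Rightarrow> ('a \<Rightarrow> 'a \<Rightarrow> real) \<Rightarrow> ('a \<Rightarrow> real) set \<Rightarrow> (('a \<Rightarrow> real) \<Rightarrow> ('a \<Rightarrow> real) \<Rightarrow> real) \<Rightarrow> bool" where
  "native_space \<Omega> K H ip \<longleftrightarrow>
     (\<forall>f\<in>H. \<forall>y. y \<notin> \<Omega> \<longrightarrow> f y = 0) \<and>
     (\<lambda>y. 0) \<in> H \<and> (\<forall>f\<in>H. \<forall>g\<in>H. (\<lambda>y. f y + g y) \<in> H) \<and> (\<forall>c. \<forall>f\<in>H. (\<lambda>y. c * f y) \<in> H) \<and>
     (\<forall>f\<in>H. \<forall>g\<in>H. ip f g = ip g f) \<and>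
     (\<forall>f\<in>H. \<forall>g\<in>H. \<forall>h\<in>H. ip (\<lambda>y. f y + g y) h = ip f h + ip g h) \<and>
     (\<forall>c. \<forall>f\<in>H. \<forall>g\<in>H. ip (\<lambda>y. c * f y) g = c * ip f g) \<and>
     (\<forall>f\<in>H. f \<noteq> (\<lambda>y. 0) \<longrightarrow> ip f f > 0) \<and>
     (\<forall>u :: nat \<Rightarrow> ('a \<Rightarrow> real). (\<forall>k. u k \<in> H) \<and>
        (\<forall>e>0. \<exists>N. \<forall>m\<ge>N. \<forall>k\<ge>N. hnorm ip (\<lambda>y. u m y - u k y) < e) \<longrightarrow>
        (\<exists>f\<in>H. (\<lambda>k. hnorm ip (\<lambda>y. u k y - f y)) \<longlonglongrightarrow> 0)) \<and>
     (\<forall>x\<in>\<Omega>. kfun \<Omega> K x \<in> H) \<and>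
     (\<forall>f\<in>H. \<forall>x\<in>\<Omega>. ip f (kfun \<Omega> K x) = f x)"

text \<open>Points are indexed 0..n-1 (the paper uses 1..n).\<close>
definition kernel_mat :: "('a \<Rightarrow> 'a \<Rightarrow> real) \<Rightarrow> (nat \<Rightarrow> 'a) \<Rightarrow> nat \<Rightarrow> real mat" where
  "kernel_mat K xs n = mat n n (\<lambda>(i, j). K (xs i) (xs j))"

definition reg_mat :: "('a \<Rightarrow> 'a \<Rightarrow> real) \<Rightarrow> (nat \<Rightarrow> 'a) \<Rightarrow> nat \<Rightarrow> real \<Rightarrow> real mat" where
  "reg_mat K xs n lam = kernel_mat K xs n + lam \<cdot>\<^sub>m 1\<^sub>m n"

definition reg_interp ::
  "'a set \<Rightarrow> ('a \<Rightarrow> 'a \<Rightarrow> real) \<Rightarrow> (nat \<Rightarrow> 'a) \<Rightarrow> nat \<Rightarrow> real \<Rightarrow> ('a \<Rightarrow> real) \<Rightarrow> ('a \<Rightarrow> real)" where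
  "reg_interp \<Omega> K xs n lam f =
     (let \<alpha> = (THE \<alpha>. \<alpha> \<in> carrier_vec n \<and> reg_mat K xs n lam *\<^sub>v \<alpha> = vec n (\<lambda>j. f (xs j)))
      in (\<lambda>y. \<Sum>j<n. \<alpha> $ j * kfun \<Omega> K (xs j) y))"

text \<open>Regularized power function (sup over the empty set taken as 0).\<close>
definition power_fun ::
  "'a set \<Rightarrow> ('a \<Rightarrow> 'a \<Rightarrow> real) \<Rightarrow> ('a \<Rightarrow> real) set \<Rightarrow> (('a \<Rightarrow> real) \<Rightarrow> ('a \<Rightarrow> real) \<Rightarrow> real)
    \<Rightarrow> (nat \<Rightarrow> 'a) \<Rightarrow> nat \<Rightarrow> real \<Rightarrow> 'a \<Rightarrow> real" where
  "power_fun \<Omega> K H ip xs n lam x =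
     Sup (insert 0 {\<bar>f x - reg_interp \<Omega> K xs n lam f x\<bar> / hnorm ip f | f. f \<in> H \<and> f \<noteq> (\<lambda>y. 0)})"

definition cholesky :: "real mat \<Rightarrow> real mat" where
  "cholesky M = (THE L. L \<in> carrier_mat (dim_row M) (dim_row M) \<and>
      upper_triangular (transpose_mat L) \<and> (\<forall>i<dim_row M. L $$ (i, i) > 0) \<and>
      M = L * transpose_mat L)"

definition mat_inv :: "real mat \<Rightarrow> real mat" where
  "mat_inv B = (THE C. C \<in> carrier_mat (dim_row B) (dim_row B) \<and> inverts_mat B C \<and> inverts_mat C B)"

definition chol_v ::
  "'a set \<Rightarrow> ('a \<Rightarrow> 'a \<Rightarrow> real) \<Rightarrow> (nat \<Rightarrow> 'a) \<Rightarrow> nat \<Rightarrow> real \<Rightarrow> nat \<Rightarrow> ('a \<Rightarrow> real)" where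
  "chol_v \<Omega> K xs n lam k =
     (let \<beta> = mat_inv (transpose_mat (cholesky (reg_mat K xs n lam)))
      in (\<lambda>y. \<Sum>j<n. \<beta> $$ (j, k) * kfun \<Omega> K (xs j) y))"

end

theory Submission
  imports Defs "Jordan_Normal_Form.Determinant"
begin

definition bf :: "nat \<Rightarrow> (nat \<Rightarrow> nat \<Rightarrow> real) \<Rightarrow> (nat \<Rightarrow> real) \<Rightarrow> (nat \<Rightarrow> real) \<Rightarrow> real" where
  "bf n M c d = (\<Sum>i<n. \<Sum>j<n. c i * d j * M i j)"

definition ev :: "nat \<Rightarrow> nat \<Rightarrow> real" where
  "ev i = (\<lambda>j. if j = i then 1 else 0)"

lemma bf_lin_left:
  assumes "finite I"
  shows "bf n M (\<lambda>j. \<Sum>k\<in>I. a k * q k j) d = (\<Sum>k\<in>I. a k * bf n M (q k) d)"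
  unfolding bf_def
  by (simp add: sum_distrib_left sum_distrib_right mult.assoc mult.left_commute sum.swap[of _ I])

lemma bf_lin_right:
  assumes "finite I"
  shows "bf n M d (\<lambda>j. \<Sum>k\<in>I. a k * q k j) = (\<Sum>k\<in>I. a k * bf n M d (q k))"
  unfolding bf_def
  by (simp add: sum_distrib_left sum_distrib_right mult.assoc mult.left_commute sum.swap[of _ I])

lemma bf_diff_left: "bf n M (\<lambda>j. c j - d j) e = bf n M c e - bf n M d e"
  unfolding bf_def by (simp add: algebra_simps sum_subtractf)

lemma bf_add_left: "bf n M (\<lambda>j. c j + d j) e = bf n M c e + bf n M d e"
  unfolding bf_def by (simp add: algebra_simps sum.distrib)

lemma bf_scale_left: "bf n M (\<lambda>j. a * c j) e = a * bf n M c e"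
  unfolding bf_def by (simp add: algebra_simps sum_distrib_left)

lemma bf_scale_right: "bf n M e (\<lambda>j. a * c j) = a * bf n M e c"
  unfolding bf_def by (simp add: algebra_simps sum_distrib_left)

lemma bf_div_left: "bf n M (\<lambda>j. c j / a) e = bf n M c e / a"
  using bf_scale_left[of n M "inverse a" c e] by (simp add: field_simps)

lemma bf_div_right: "bf n M e (\<lambda>j. c j / a) = bf n M e c / a"
  using bf_scale_right[of n M e "inverse a" c] by (simp add: field_simps)

lemma bf_sym:
  assumes "\<forall>i<n. \<forall>j<n. M i j = M j i"
  shows "bf n M c d = bf n M d c"
  unfolding bf_def using assms
  by (subst sum.swap) (auto intro!: sum.cong simp: mult.commute)

lemma if_one_mult: "(if a then (1::real) else 0) * x = (if a then x else 0)" by simp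

lemma bf_ev_ev: "bf n M (ev i) (ev j) = M i j" if "i < n" "j < n"
proof -
  have "bf n M (ev i) (ev j) = (\<Sum>ia<n. if ia = i then (\<Sum>ja<n. if ja = j then M ia ja else 0) else 0)"
    unfolding bf_def ev_def by (intro sum.cong refl) (simp add: if_one_mult)
  also have "\<dots> = M i j" by (simp add: that)
  finally show ?thesis .
qed

lemma sum_if_eq: "finite I \<Longrightarrow> l \<in> I \<Longrightarrow> (\<Sum>k\<in>I. a k * (if k = l then 1 else 0)) = (a l :: real)"
  by (simp add: if_distrib cong: if_cong)

lemma gs_exists:
  assumes sym: "\<forall>i<n. \<forall>j<n. M i j = M j i"
    and pd: "\<forall>c. (\<exists>i<n. c i \<noteq> 0) \<longrightarrow> bf n M c c > 0"
  shows "m \<le> n \<Longrightarrow> \<exists>q. (\<forall>k<m. \<forall>j>k. q k j = 0) \<and>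
      (\<forall>k<m. \<forall>l<m. bf n M (q k) (q l) = (if k = l then 1 else 0)) \<and>
      (\<forall>i<m. \<forall>j. ev i j = (\<Sum>k\<le>i. bf n M (ev i) (q k) * q k j)) \<and>
      (\<forall>i<m. bf n M (ev i) (q i) > 0)"
proof (induction m)
  case 0
  then show ?case by auto
next
  case (Suc m)
  then obtain q where supp: "\<forall>k<m. \<forall>j>k. q k j = 0"
    and orth: "\<forall>k<m. \<forall>l<m. bf n M (q k) (q l) = (if k = l then 1 else 0)"
    and repr: "\<forall>i<m. \<forall>j. ev i j = (\<Sum>k\<le>i. bf n M (ev i) (q k) * q k j)"
    and posd: "\<forall>i<m. bf n M (ev i) (q i) > 0" by auto
  have mn: "m < n" using Suc.prems by simp
  define a where "a k = bf n M (ev m) (q k)" for k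
  define r where "r j = ev m j - (\<Sum>k<m. a k * q k j)" for j
  have rm: "r m = 1" using supp by (simp add: r_def ev_def)
  have "\<exists>i<n. r i \<noteq> 0" using mn rm by (intro exI[of _ m]) simp
  then have rpos: "bf n M r r > 0" using pd by blast
  have r_orth: "bf n M r (q l) = 0" if "l < m" for l
  proof -
    have "bf n M r (q l) = bf n M (ev m) (q l) - (\<Sum>k<m. a k * bf n M (q k) (q l))"
      unfolding r_def[abs_def] by (simp add: bf_diff_left bf_lin_left)
    also have "(\<Sum>k<m. a k * bf n M (q k) (q l)) = a l"
      using orth that by (simp add: sum_if_eq)
    finally show ?thesis by (simp add: a_def)
  qed
  define s where "s = sqrt (bf n M r r)"
  have spos: "s > 0" using rpos by (simp add: s_def)
  have ss: "s * s = bf n M r r" using rpos by (simp add: s_def)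
  define qm where "qm j = r j / s" for j
  define q' where "q' = q(m := qm)"
  have qm_qm: "bf n M qm qm = 1"
    unfolding qm_def[abs_def] using spos ss rpos by (simp add: bf_div_left bf_div_right)
  have qm_ql: "bf n M qm (q l) = 0" if "l < m" for l
    unfolding qm_def[abs_def] using r_orth that by (simp add: bf_div_left)
  have ql_qm: "bf n M (q l) qm = 0" if "l < m" for l
    using qm_ql[OF that] bf_sym[OF sym] by metis
  have evm: "ev m = (\<lambda>j. r j + (\<Sum>k<m. a k * q k j))" by (simp add: r_def)
  have evm_qm: "bf n M (ev m) qm = s"
  proof -
    have "bf n M (ev m) qm = bf n M r qm + (\<Sum>k<m. a k * bf n M (q k) qm)"
      by (subst evm) (simp add: bf_add_left bf_lin_left)
    also have "(\<Sum>k<m. a k * bf n M (q k) qm) = 0" using ql_qm by simp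
    also have "bf n M r qm = s" unfolding qm_def[abs_def] using spos ss
      by (simp add: bf_div_right ss[symmetric])
    finally show ?thesis by simp
  qed
  show ?case
  proof (intro exI[of _ q'] conjI allI impI)
    fix k j assume "k < Suc m" "k < j"
    then show "q' k j = 0" using supp
      by (cases "k = m") (auto simp: q'_def qm_def r_def ev_def)
  next
    fix k l assume "k < Suc m" "l < Suc m"
    then show "bf n M (q' k) (q' l) = (if k = l then 1 else 0)"
      using orth qm_qm qm_ql ql_qm
      by (cases "k = m"; cases "l = m") (auto simp: q'_def)
  next
    fix i j assume i: "i < Suc m"
    show "ev i j = (\<Sum>k\<le>i. bf n M (ev i) (q' k) * q' k j)"
    proof (cases "i = m")
      case False
      then have "i < m" using i by simp
      then show ?thesis using repr by (simp add: q'_def)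
    next
      case True
      have "(\<Sum>k\<le>i. bf n M (ev i) (q' k) * q' k j)
          = (\<Sum>k<m. a k * q k j) + s * qm j"
        using True by (simp add: lessThan_Suc_atMost[symmetric] q'_def evm_qm a_def)
      also have "s * qm j = r j" using spos by (simp add: qm_def)
      finally show ?thesis using True by (simp add: r_def)
    qed
  next
    fix i assume i: "i < Suc m"
    then show "bf n M (ev i) (q' i) > 0" using posd evm_qm spos
      by (cases "i = m") (auto simp: q'_def)
  qed
qed

lemma mult_entry:
  fixes A B :: "real mat"
  assumes "A \<in> carrier_mat n m" "B \<in> carrier_mat m p" "i < n" "j < p"
  shows "(A * B) $$ (i, j) = (\<Sum>k<m. A $$ (i, k) * B $$ (k, j))"
  using assms by (simp add: scalar_prod_def atLeast0LessThan)

lemma mult_transpose_entry: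
  fixes L :: "real mat"
  assumes "L \<in> carrier_mat n m" "i < n" "j < n"
  shows "(L * transpose_mat L) $$ (i, j) = (\<Sum>k<m. L $$ (i, k) * L $$ (j, k))"
  using assms by (simp add: scalar_prod_def atLeast0LessThan)

lemma sum_upto_last:
  fixes f :: "nat \<Rightarrow> real"
  assumes "j < n" "\<And>k. j < k \<Longrightarrow> k < n \<Longrightarrow> f k = 0"
  shows "(\<Sum>k<n. f k) = (\<Sum>k<j. f k) + f j"
proof -
  have "(\<Sum>k<n. f k) = (\<Sum>k<Suc j. f k)"
    using assms by (intro sum.mono_neutral_right) auto
  then show ?thesis by simp
qed

lemma chol_unique_fun:
  fixes a b :: "nat \<Rightarrow> nat \<Rightarrow> real"
  assumes eq: "\<forall>i<n. \<forall>j<n. (\<Sum>k<n. a i k * a j k) = (\<Sum>k<n. b i k * b j k)"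
    and az: "\<forall>i<n. \<forall>k<n. i < k \<longrightarrow> a i k = 0" and bz: "\<forall>i<n. \<forall>k<n. i < k \<longrightarrow> b i k = 0"
    and ap: "\<forall>i<n. a i i > 0" and bp: "\<forall>i<n. b i i > 0"
  shows "i < n \<Longrightarrow> \<forall>j<n. a i j = b i j"
proof (induction i rule: less_induct)
  case (less i)
  note i_n = less.prems
  note oIH = less.IH
  show ?case
  proof (intro allI impI)
    fix j assume "j < n"
    then show "a i j = b i j"
    proof (induction j rule: less_induct)
      case (less j)
      show ?case
      proof (cases "i < j")
        case True then show ?thesis using az bz less.prems by auto
      next
        case False
        then have ji: "j \<le> i" by simp
        have sa: "(\<Sum>k<n. a i k * a j k) = (\<Sum>k<j. a i k * a j k) + a i j * a j j"
          using less.prems az by (intro sum_upto_last) auto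
        have sb: "(\<Sum>k<n. b i k * b j k) = (\<Sum>k<j. b i k * b j k) + b i j * b j j"
          using less.prems bz by (intro sum_upto_last) auto
        have irow: "(\<Sum>k<j. a i k * a j k) = (\<Sum>k<j. b i k * b j k)"
        proof (cases "j = i")
          case True
          then show ?thesis using less.IH less.prems by (intro sum.cong) auto
        next
          case False
          then have "j < i" using ji by simp
          then have "\<forall>k<n. a j k = b j k" using oIH i_n by simp
          then show ?thesis using less.IH less.prems by (intro sum.cong) auto
        qed
        have main: "a i j * a j j = b i j * b j j"
          using eq i_n less.prems sa sb irow by auto
        show ?thesis
        proof (cases "j = i")
          case True
          then have "a i i * a i i = b i i * b i i" using main by simp
          then have "a i i ^ 2 = b i i ^ 2" by (simp add: power2_eq_square)
          then show ?thesis using True ap bp i_n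
            by (metis less_imp_le power2_eq_imp_eq)
        next
          case False
          then have "j < i" using ji by simp
          then have "a j j = b j j" using oIH less.prems i_n by simp
          moreover have "b j j > 0" using bp less.prems by simp
          ultimately show ?thesis using main by simp
        qed
      qed
    qed
  qed
qed

definition chol_prop :: "nat \<Rightarrow> real mat \<Rightarrow> real mat \<Rightarrow> bool" where
  "chol_prop n M L \<longleftrightarrow> L \<in> carrier_mat n n \<and>
      upper_triangular (transpose_mat L) \<and> (\<forall>i<n. L $$ (i, i) > 0) \<and>
      M = L * transpose_mat L"

lemma chol_prop_unique:
  assumes "chol_prop n M L1" "chol_prop n M L2"
  shows "L1 = L2"
proof -
  have c1: "L1 \<in> carrier_mat n n" and c2: "L2 \<in> carrier_mat n n"
    using assms by (auto simp: chol_prop_def)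
  have eq: "\<forall>i<n. \<forall>j<n. (\<Sum>k<n. L1 $$ (i,k) * L1 $$ (j,k)) = (\<Sum>k<n. L2 $$ (i,k) * L2 $$ (j,k))"
  proof (intro allI impI)
    fix i j assume ij: "i < n" "j < n"
    have "(L1 * transpose_mat L1) $$ (i,j) = (L2 * transpose_mat L2) $$ (i,j)"
      using assms unfolding chol_prop_def by metis
    then show "(\<Sum>k<n. L1 $$ (i,k) * L1 $$ (j,k)) = (\<Sum>k<n. L2 $$ (i,k) * L2 $$ (j,k))"
      using c1 c2 ij by (simp only: mult_transpose_entry)
  qed
  have z1: "\<forall>i<n. \<forall>k<n. i < k \<longrightarrow> L1 $$ (i,k) = 0"
  proof (intro allI impI)
    fix i k assume "i < n" "k < n" "i < k"
    then have "transpose_mat L1 $$ (k,i) = 0" using assms(1) c1 unfolding chol_prop_def upper_triangular_def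
      by simp
    then show "L1 $$ (i,k) = 0" using c1 \<open>i < n\<close> \<open>k < n\<close> by simp
  qed
  have z2: "\<forall>i<n. \<forall>k<n. i < k \<longrightarrow> L2 $$ (i,k) = 0"
  proof (intro allI impI)
    fix i k assume "i < n" "k < n" "i < k"
    then have "transpose_mat L2 $$ (k,i) = 0" using assms(2) c2 unfolding chol_prop_def upper_triangular_def
      by simp
    then show "L2 $$ (i,k) = 0" using c2 \<open>i < n\<close> \<open>k < n\<close> by simp
  qed
  have p1: "\<forall>i<n. L1 $$ (i,i) > 0" and p2: "\<forall>i<n. L2 $$ (i,i) > 0"
    using assms by (auto simp: chol_prop_def)
  have "\<forall>j<n. L1 $$ (i,j) = L2 $$ (i,j)" if "i < n" for i
    using chol_unique_fun[OF eq z1 z2 p1 p2 that] .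
  then show ?thesis using c1 c2 by (intro eq_matI) (simp_all add: carrier_matD)
qed

lemma bf_zero_above:
  assumes sym: "\<forall>i<n. \<forall>j<n. M i j = M j i"
    and orth: "\<forall>k<n. \<forall>l<n. bf n M (q k) (q l) = (if k = l then 1 else 0)"
    and repr: "\<forall>i<n. \<forall>j. ev i j = (\<Sum>k\<le>i. bf n M (ev i) (q k) * q k j)"
    and ik: "i < k" "k < n"
  shows "bf n M (ev i) (q k) = 0"
proof -
  have "ev i = (\<lambda>j. \<Sum>k'\<le>i. bf n M (ev i) (q k') * q k' j)" using repr ik by auto
  then have "bf n M (ev i) (q k) = (\<Sum>k'\<le>i. bf n M (ev i) (q k') * bf n M (q k') (q k))"
    by (metis (no_types) bf_lin_left finite_atMost)
  also have "\<dots> = 0" using orth ik by (intro sum.neutral) auto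
  finally show ?thesis .
qed

lemma chol_facts:
  fixes M :: "real mat"
  assumes Mc: "M \<in> carrier_mat n n"
    and sym: "\<forall>i<n. \<forall>j<n. M $$ (i,j) = M $$ (j,i)"
    and pd: "\<forall>c. (\<exists>i<n. c i \<noteq> 0) \<longrightarrow> bf n (\<lambda>i j. M $$ (i,j)) c c > 0"
  shows "cholesky M \<in> carrier_mat n n \<and> M = cholesky M * transpose_mat (cholesky M) \<and>
    mat_inv (transpose_mat (cholesky M)) \<in> carrier_mat n n \<and>
    mat_inv (transpose_mat (cholesky M)) * transpose_mat (cholesky M) = 1\<^sub>m n \<and>
    transpose_mat (cholesky M) * mat_inv (transpose_mat (cholesky M)) = 1\<^sub>m n"
proof -
  define Mf where "Mf i j = M $$ (i,j)" for i j
  have symf: "\<forall>i<n. \<forall>j<n. Mf i j = Mf j i" using sym by (simp add: Mf_def)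
  have pdf: "\<forall>c. (\<exists>i<n. c i \<noteq> 0) \<longrightarrow> bf n Mf c c > 0"
    using pd unfolding Mf_def[abs_def] by simp
  obtain q where supp: "\<forall>k<n. \<forall>j>k. q k j = 0"
    and orth: "\<forall>k<n. \<forall>l<n. bf n Mf (q k) (q l) = (if k = l then 1 else 0)"
    and repr: "\<forall>i<n. \<forall>j. ev i j = (\<Sum>k\<le>i. bf n Mf (ev i) (q k) * q k j)"
    and posd: "\<forall>i<n. bf n Mf (ev i) (q i) > 0"
    using gs_exists[OF symf pdf, of n] by auto
  define Lf where "Lf i k = (if k \<le> i then bf n Mf (ev i) (q k) else 0)" for i k
  have Lf_eq: "Lf i k = bf n Mf (ev i) (q k)" if "i < n" "k < n" for i k
    using bf_zero_above[OF symf orth repr, of i k] that by (auto simp: Lf_def)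
  have Mf_eq: "Mf i j = (\<Sum>k<n. Lf i k * Lf j k)" if ij: "i < n" "j < n" for i j
  proof -
    have "Mf i j = bf n Mf (ev i) (ev j)" using bf_ev_ev ij by simp
    also have "ev j = (\<lambda>y. \<Sum>k\<le>j. bf n Mf (ev j) (q k) * q k y)" using repr ij by auto
    also have "bf n Mf (ev i) (\<lambda>y. \<Sum>k\<le>j. bf n Mf (ev j) (q k) * q k y)
        = (\<Sum>k\<le>j. bf n Mf (ev j) (q k) * bf n Mf (ev i) (q k))"
      by (simp add: bf_lin_right)
    also have "\<dots> = (\<Sum>k\<le>j. Lf i k * Lf j k)"
      using ij by (intro sum.cong refl) (simp add: Lf_eq)
    also have "\<dots> = (\<Sum>k<n. Lf i k * Lf j k)"
      using ij by (intro sum.mono_neutral_left) (auto simp: Lf_def)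
    finally show ?thesis .
  qed
  define Lm where "Lm = mat n n (\<lambda>(i,k). Lf i k)"
  define Bm where "Bm = mat n n (\<lambda>(i,k). q k i)"
  have Lmc: "Lm \<in> carrier_mat n n" and Bmc: "Bm \<in> carrier_mat n n"
    by (simp_all add: Lm_def Bm_def)
  have LmT: "transpose_mat Lm \<in> carrier_mat n n" using Lmc by simp
  have P: "chol_prop n M Lm"
    unfolding chol_prop_def
  proof (intro conjI)
    show "Lm \<in> carrier_mat n n" by (rule Lmc)
    show "upper_triangular (transpose_mat Lm)"
      unfolding upper_triangular_def by (auto simp: Lm_def Lf_def)
    show "\<forall>i<n. 0 < Lm $$ (i, i)" using posd by (simp add: Lm_def Lf_def Mf_def[abs_def])
    show "M = Lm * transpose_mat Lm"
    proof (rule eq_matI)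
      fix i j assume "i < dim_row (Lm * transpose_mat Lm)" "j < dim_col (Lm * transpose_mat Lm)"
      then have ij: "i < n" "j < n" using Lmc by auto
      have "(Lm * transpose_mat Lm) $$ (i,j) = (\<Sum>k<n. Lm $$ (i,k) * Lm $$ (j,k))"
        using mult_transpose_entry[OF Lmc ij] .
      also have "\<dots> = Mf i j" using ij by (simp add: Mf_eq Lm_def)
      finally show "M $$ (i,j) = (Lm * transpose_mat Lm) $$ (i,j)" by (simp add: Mf_def)
    qed (use Mc Lmc in auto)
  qed
  have chol: "cholesky M = Lm"
  proof -
    have "(THE L. chol_prop n M L) = Lm"
      using P chol_prop_unique by blast
    moreover have "dim_row M = n" using Mc by simp
    ultimately show ?thesis unfolding cholesky_def chol_prop_def by simp
  qed
  have BL: "Bm * transpose_mat Lm = 1\<^sub>m n"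
  proof (rule eq_matI)
    fix i j assume "i < dim_row (1\<^sub>m n :: real mat)" "j < dim_col (1\<^sub>m n :: real mat)"
    then have ij: "i < n" "j < n" by auto
    have "(Bm * transpose_mat Lm) $$ (i,j) = (\<Sum>k<n. Bm $$ (i,k) * transpose_mat Lm $$ (k,j))"
      using mult_entry[OF Bmc LmT ij] .
    also have "\<dots> = (\<Sum>k<n. Lf j k * q k i)"
      using ij by (intro sum.cong refl) (simp add: Bm_def Lm_def)
    also have "\<dots> = (\<Sum>k\<le>j. Lf j k * q k i)"
      using ij by (intro sum.mono_neutral_right) (auto simp: Lf_def)
    also have "\<dots> = ev j i"
      using repr ij by (simp add: Lf_def)
    also have "\<dots> = 1\<^sub>m n $$ (i,j)" using ij by (simp add: ev_def)
    finally show "(Bm * transpose_mat Lm) $$ (i,j) = 1\<^sub>m n $$ (i,j)" .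
  qed (use Bmc Lmc in auto)
  have LB: "transpose_mat Lm * Bm = 1\<^sub>m n"
    using mat_mult_left_right_inverse[OF Bmc LmT BL] .
  have inv: "mat_inv (transpose_mat Lm) = Bm"
  proof -
    have "(THE C. C \<in> carrier_mat n n \<and> inverts_mat (transpose_mat Lm) C \<and> inverts_mat C (transpose_mat Lm)) = Bm"
    proof (rule the_equality)
      show "Bm \<in> carrier_mat n n \<and> inverts_mat (transpose_mat Lm) Bm \<and> inverts_mat Bm (transpose_mat Lm)"
        using Bmc Lmc LB BL by (simp add: inverts_mat_def)
      fix C assume C: "C \<in> carrier_mat n n \<and> inverts_mat (transpose_mat Lm) C \<and> inverts_mat C (transpose_mat Lm)"
      then have CL: "C * transpose_mat Lm = 1\<^sub>m n" using C by (simp add: inverts_mat_def)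
      have Cc: "C \<in> carrier_mat n n" using C by simp
      have "C = C * (transpose_mat Lm * Bm)" using LB right_mult_one_mat[OF Cc] by simp
      also have "\<dots> = (C * transpose_mat Lm) * Bm" using assoc_mult_mat[OF Cc LmT Bmc] by simp
      also have "\<dots> = Bm" using CL Bmc by simp
      finally show "C = Bm" .
    qed
    then show ?thesis unfolding mat_inv_def using Lmc by simp
  qed
  show ?thesis using chol inv Lmc Bmc BL LB P by (simp add: chol_prop_def)
qed

context
  fixes \<Omega> :: "'a set" and K H ip
  assumes ns: "native_space \<Omega> K H ip"
begin

lemma ns_zero: "(\<lambda>y. 0) \<in> H" using ns unfolding native_space_def by blast
lemma ns_add: "f \<in> H \<Longrightarrow> g \<in> H \<Longrightarrow> (\<lambda>y. f y + g y) \<in> H" using ns unfolding native_space_def by blast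
lemma ns_scale: "f \<in> H \<Longrightarrow> (\<lambda>y. c * f y) \<in> H" using ns unfolding native_space_def by blast
lemma ns_sym: "f \<in> H \<Longrightarrow> g \<in> H \<Longrightarrow> ip f g = ip g f" using ns unfolding native_space_def by blast
lemma ns_add_left: "f \<in> H \<Longrightarrow> g \<in> H \<Longrightarrow> h \<in> H \<Longrightarrow> ip (\<lambda>y. f y + g y) h = ip f h + ip g h"
  using ns unfolding native_space_def by blast
lemma ns_scale_left: "f \<in> H \<Longrightarrow> g \<in> H \<Longrightarrow> ip (\<lambda>y. c * f y) g = c * ip f g"
  using ns unfolding native_space_def by blast
lemma ns_pos: "f \<in> H \<Longrightarrow> f \<noteq> (\<lambda>y. 0) \<Longrightarrow> ip f f > 0"
  using ns unfolding native_space_def by blast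
lemma ns_kfun: "x \<in> \<Omega> \<Longrightarrow> kfun \<Omega> K x \<in> H"
  using ns unfolding native_space_def by blast
lemma ns_repr: "f \<in> H \<Longrightarrow> x \<in> \<Omega> \<Longrightarrow> ip f (kfun \<Omega> K x) = f x"
  using ns unfolding native_space_def by blast
lemma ns_repr': "f \<in> H \<Longrightarrow> x \<in> \<Omega> \<Longrightarrow> ip (kfun \<Omega> K x) f = f x"
  using ns_repr[of f x] ns_sym[of f "kfun \<Omega> K x"] ns_kfun[of x] by simp

lemma ns_zero_left: "g \<in> H \<Longrightarrow> ip (\<lambda>y. 0) g = 0"
  using ns_scale_left[OF ns_zero, of g 0] by simp

lemma ns_zero_right: "g \<in> H \<Longrightarrow> ip g (\<lambda>y. 0) = 0"
  using ns_zero_left[of g] ns_sym[of g "\<lambda>y. 0"] ns_zero by simp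

lemma ns_diff: "f \<in> H \<Longrightarrow> g \<in> H \<Longrightarrow> (\<lambda>y. f y - g y) \<in> H"
  using ns_add[OF _ ns_scale[of g "-1"], of f] by simp

lemma ns_diff_left: "f \<in> H \<Longrightarrow> g \<in> H \<Longrightarrow> h \<in> H \<Longrightarrow> ip (\<lambda>y. f y - g y) h = ip f h - ip g h"
  using ns_add_left[OF _ ns_scale[of g "-1"], of f h] ns_scale_left[of g h "-1"] by simp

lemma ns_diff_right: "f \<in> H \<Longrightarrow> g \<in> H \<Longrightarrow> h \<in> H \<Longrightarrow> ip h (\<lambda>y. f y - g y) = ip h f - ip h g"
  using ns_diff_left[of f g h] ns_sym[of h "\<lambda>y. f y - g y"] ns_diff[of f g] ns_sym[of h f] ns_sym[of h g] by simp

lemma ns_sum: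
  assumes "finite I" "\<forall>i\<in>I. f i \<in> H"
  shows "(\<lambda>y. \<Sum>i\<in>I. c i * f i y) \<in> H"
  using assms
proof (induction I rule: finite_induct)
  case empty then show ?case using ns_zero by simp
next
  case (insert a I)
  then show ?case using ns_add[OF ns_scale[of "f a" "c a"]] by simp
qed

lemma ns_sum_left:
  assumes "finite I" "\<forall>i\<in>I. f i \<in> H" "g \<in> H"
  shows "ip (\<lambda>y. \<Sum>i\<in>I. c i * f i y) g = (\<Sum>i\<in>I. c i * ip (f i) g)"
  using assms
proof (induction I rule: finite_induct)
  case empty then show ?case using ns_zero_left by simp
next
  case (insert a I)
  have fa: "f a \<in> H" using insert by simp
  have s: "(\<lambda>y. \<Sum>i\<in>I. c i * f i y) \<in> H" by (rule ns_sum) (use insert in auto)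
  have "ip (\<lambda>y. \<Sum>i\<in>insert a I. c i * f i y) g = ip (\<lambda>y. c a * f a y + (\<Sum>i\<in>I. c i * f i y)) g"
    using insert by simp
  also have "\<dots> = c a * ip (f a) g + ip (\<lambda>y. \<Sum>i\<in>I. c i * f i y) g"
    using ns_add_left[OF ns_scale[OF fa] s insert(5)] ns_scale_left[OF fa insert(5)] by simp
  finally show ?case using insert by simp
qed

lemma ns_sum_right:
  assumes "finite I" "\<forall>i\<in>I. f i \<in> H" "g \<in> H"
  shows "ip g (\<lambda>y. \<Sum>i\<in>I. c i * f i y) = (\<Sum>i\<in>I. c i * ip g (f i))"
proof -
  have "ip g (\<lambda>y. \<Sum>i\<in>I. c i * f i y) = ip (\<lambda>y. \<Sum>i\<in>I. c i * f i y) g"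
    using ns_sym[OF assms(3) ns_sum[OF assms(1,2)]] .
  also have "\<dots> = (\<Sum>i\<in>I. c i * ip (f i) g)" using ns_sum_left[OF assms] .
  also have "\<dots> = (\<Sum>i\<in>I. c i * ip g (f i))" using assms ns_sym by (intro sum.cong) auto
  finally show ?thesis .
qed

lemma ns_nonneg: "f \<in> H \<Longrightarrow> ip f f \<ge> 0"
proof (cases "f = (\<lambda>y. 0)")
  case True
  then show ?thesis using ns_zero_left[OF ns_zero] by simp
next
  case False
  assume "f \<in> H"
  then show ?thesis using ns_pos[OF _ False] by (simp add: less_imp_le)
qed

lemma ns_cs:
  assumes f: "f \<in> H" and g: "g \<in> H"
  shows "\<bar>ip f g\<bar> \<le> hnorm ip f * hnorm ip g"
proof (cases "g = (\<lambda>y. 0)")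
  case True
  then show ?thesis using ns_zero_right[OF f] f g ns_nonneg by (simp add: hnorm_def)
next
  case False
  then have gg: "ip g g > 0" using ns_pos g by simp
  define t where "t = ip f g / ip g g"
  define h where "h = (\<lambda>y. f y - t * g y)"
  have tg: "(\<lambda>y. t * g y) \<in> H" using ns_scale g by simp
  have h: "h \<in> H" unfolding h_def using ns_diff[OF f tg] .
  have hh: "ip h h = ip f h - t * ip g h"
    unfolding h_def[of] using ns_diff_left[OF f tg h] ns_scale_left[OF g h] by (simp add: h_def)
  have fs: "ip f (\<lambda>y. t * g y) = t * ip f g"
    using ns_sym[OF f tg] ns_scale_left[OF g f] ns_sym[OF f g] by simp
  have gs: "ip g (\<lambda>y. t * g y) = t * ip g g"
    using ns_sym[OF g tg] ns_scale_left[OF g g] by simp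
  have "ip f h = ip f f - t * ip f g"
    unfolding h_def using ns_diff_right[OF f tg f] fs by simp
  moreover have "ip g h = ip g f - t * ip g g"
    unfolding h_def using ns_diff_right[OF f tg g] gs by simp
  ultimately have "ip h h = ip f f - t * ip f g - t * (ip g f - t * ip g g)"
    using hh by simp
  then have "ip h h = ip f f - 2 * t * ip f g + t * t * ip g g"
    using ns_sym[OF f g] by (simp add: algebra_simps)
  also have "\<dots> = ip f f - (ip f g)^2 / ip g g"
    using gg by (simp add: t_def field_simps power2_eq_square)
  finally have "(ip f g)^2 / ip g g \<le> ip f f" using ns_nonneg[OF h] by simp
  then have "(ip f g)^2 \<le> ip f f * ip g g" using gg by (simp add: field_simps)
  then have "sqrt ((ip f g)^2) \<le> sqrt (ip f f * ip g g)" by (rule real_sqrt_le_mono)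
  then show ?thesis by (simp add: hnorm_def real_sqrt_mult)
qed

end

lemma triple_sum:
  fixes B :: "nat \<Rightarrow> nat \<Rightarrow> real"
  shows "(\<Sum>j<n. (\<Sum>l<n. (\<Sum>k<n. B j k * B l k) * z l) * w j)
       = (\<Sum>k<n. (\<Sum>l<n. B l k * z l) * (\<Sum>j<n. B j k * w j))"
proof -
  have "(\<Sum>j<n. (\<Sum>l<n. (\<Sum>k<n. B j k * B l k) * z l) * w j)
      = (\<Sum>j<n. \<Sum>l<n. \<Sum>k<n. B j k * B l k * z l * w j)"
    by (simp add: sum_distrib_right)
  also have "\<dots> = (\<Sum>j<n. \<Sum>k<n. \<Sum>l<n. B j k * B l k * z l * w j)"
    by (rule sum.cong[OF refl], rule sum.swap)
  also have "\<dots> = (\<Sum>k<n. \<Sum>j<n. \<Sum>l<n. B j k * B l k * z l * w j)"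
    by (rule sum.swap)
  also have "\<dots> = (\<Sum>k<n. \<Sum>l<n. \<Sum>j<n. B j k * B l k * z l * w j)"
    by (rule sum.cong[OF refl], rule sum.swap)
  also have "\<dots> = (\<Sum>k<n. (\<Sum>l<n. B l k * z l) * (\<Sum>j<n. B j k * w j))"
    by (simp add: sum_distrib_left sum_distrib_right mult_ac)
  finally show ?thesis .
qed

lemma swap_sym_sum:
  fixes G :: "nat \<Rightarrow> nat \<Rightarrow> real"
  assumes "\<And>j l. j < n \<Longrightarrow> l < n \<Longrightarrow> G j l = G l j"
  shows "(\<Sum>j<n. (\<Sum>l<n. G j l * f l) * z j) = (\<Sum>j<n. (\<Sum>l<n. G j l * z l) * f j)"
proof -
  have "(\<Sum>j<n. (\<Sum>l<n. G j l * f l) * z j) = (\<Sum>j<n. \<Sum>l<n. G j l * f l * z j)"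
    by (simp add: sum_distrib_right)
  also have "\<dots> = (\<Sum>l<n. \<Sum>j<n. G j l * f l * z j)" by (rule sum.swap)
  also have "\<dots> = (\<Sum>l<n. \<Sum>j<n. G l j * z j * f l)"
    using assms by (intro sum.cong refl) (simp add: mult_ac)
  also have "\<dots> = (\<Sum>j<n. (\<Sum>l<n. G j l * z l) * f j)"
    by (simp add: sum_distrib_right)
  finally show ?thesis .
qed

lemma mat_vec_entry:
  fixes A :: "real mat"
  assumes "A \<in> carrier_mat n n" "j < n"
  shows "(A *\<^sub>v vec n h) $ j = (\<Sum>l<n. A $$ (j, l) * h l)"
  using assms by (simp add: scalar_prod_def atLeast0LessThan)


theorem proposition3p1:
  fixes \<Omega> :: "(real ^ 'd) set" and K :: "real ^ 'd \<Rightarrow> real ^ 'd \<Rightarrow> real"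
    and H :: "(real ^ 'd \<Rightarrow> real) set"
    and ip :: "(real ^ 'd \<Rightarrow> real) \<Rightarrow> (real ^ 'd \<Rightarrow> real) \<Rightarrow> real"
    and xs :: "nat \<Rightarrow> real ^ 'd" and n :: nat and lam :: real and x :: "real ^ 'd"
  assumes "(pd_kernel \<Omega> K \<and> lam > 0) \<or> (spd_kernel \<Omega> K \<and> lam \<ge> 0)"
    and "native_space \<Omega> K H ip"
    and "\<forall>i<n. xs i \<in> \<Omega>" and "inj_on xs {..<n}"
    and "x \<in> \<Omega>"
  shows "power_fun \<Omega> K H ip xs n lam x ^ 2
           = hnorm ip (\<lambda>y. kfun \<Omega> K x y - reg_interp \<Omega> K xs n lam (kfun \<Omega> K x) y) ^ 2
       \<and> hnorm ip (\<lambda>y. kfun \<Omega> K x y - reg_interp \<Omega> K xs n lam (kfun \<Omega> K x) y) ^ 2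
           = K x x - 2 * (\<Sum>k<n. chol_v \<Omega> K xs n lam k x ^ 2)
             + (\<Sum>k<n. \<Sum>l<n. chol_v \<Omega> K xs n lam k x * chol_v \<Omega> K xs n lam l x
                  * ip (chol_v \<Omega> K xs n lam k) (chol_v \<Omega> K xs n lam l))"
proof -
  note ns = assms(2)
  have xsO: "xs i \<in> \<Omega>" if "i < n" for i using assms(3) that by simp
  have xO: "x \<in> \<Omega>" by (rule assms(5))
  have symK: "K a b = K b a" if "a \<in> \<Omega>" "b \<in> \<Omega>" for a b
    using assms(1) that unfolding pd_kernel_def spd_kernel_def by blast
  define M where "M = reg_mat K xs n lam"
  have Mc: "M \<in> carrier_mat n n" by (simp add: M_def reg_mat_def kernel_mat_def)
  have Me: "M $$ (i,j) = K (xs i) (xs j) + (if i = j then lam else 0)" if "i < n" "j < n" for i j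
    using that by (simp add: M_def reg_mat_def kernel_mat_def)
  have symM: "\<forall>i<n. \<forall>j<n. M $$ (i,j) = M $$ (j,i)" using Me symK xsO by simp
  have pdM: "\<forall>c. (\<exists>i<n. c i \<noteq> 0) \<longrightarrow> bf n (\<lambda>i j. M $$ (i,j)) c c > 0"
  proof (intro allI impI)
    fix c :: "nat \<Rightarrow> real" assume "\<exists>i<n. c i \<noteq> 0"
    then obtain i0 where i0: "i0 < n" "c i0 \<noteq> 0" by blast
    define Q where "Q = (\<Sum>i<n. \<Sum>j<n. c i * c j * K (xs i) (xs j))"
    have bfeq: "bf n (\<lambda>i j. M $$ (i,j)) c c = Q + lam * (\<Sum>i<n. c i * c i)"
    proof -
      have "bf n (\<lambda>i j. M $$ (i,j)) c c
          = (\<Sum>i<n. (\<Sum>j<n. c i * c j * K (xs i) (xs j)) + lam * (c i * c i))"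
        unfolding bf_def
      proof (rule sum.cong[OF refl])
        fix i assume i: "i \<in> {..<n}"
        have "(\<Sum>j<n. c i * c j * M $$ (i,j))
            = (\<Sum>j<n. c i * c j * K (xs i) (xs j) + (if j = i then lam * (c i * c i) else 0))"
          using i by (intro sum.cong refl) (auto simp: Me algebra_simps)
        also have "\<dots> = (\<Sum>j<n. c i * c j * K (xs i) (xs j)) + lam * (c i * c i)"
          using i by (simp add: sum.distrib)
        finally show "(\<Sum>j<n. c i * c j * M $$ (i,j))
            = (\<Sum>j<n. c i * c j * K (xs i) (xs j)) + lam * (c i * c i)" .
      qed
      then show ?thesis by (simp add: Q_def sum.distrib sum_distrib_left)
    qed
    have sq: "(\<Sum>i<n. c i * c i) > 0"
    proof -
      have "c i0 * c i0 \<le> (\<Sum>i<n. c i * c i)" using i0 by (intro member_le_sum) auto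
      moreover have "c i0 * c i0 > 0" using i0(2) by (metis linorder_neqE_linordered_idom mult_neg_neg mult_pos_pos)
      ultimately show ?thesis by linarith
    qed
    from assms(1) show "bf n (\<lambda>i j. M $$ (i,j)) c c > 0"
    proof
      assume a: "pd_kernel \<Omega> K \<and> 0 < lam"
      have "Q \<ge> 0" using a assms(3,4) unfolding pd_kernel_def Q_def by blast
      moreover have "lam * (\<Sum>i<n. c i * c i) > 0" using a sq by simp
      ultimately show ?thesis using bfeq by linarith
    next
      assume a: "spd_kernel \<Omega> K \<and> 0 \<le> lam"
      have "Q > 0" using a assms(3,4) i0 unfolding spd_kernel_def Q_def by blast
      moreover have "lam * (\<Sum>i<n. c i * c i) \<ge> 0" using a sq by simp
      ultimately show ?thesis using bfeq by linarith
    qed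
  qed
  define L where "L = cholesky M"
  define bt where "bt = mat_inv (transpose_mat L)"
  have Lc: "L \<in> carrier_mat n n" and MeqLL: "M = L * transpose_mat L" and btc: "bt \<in> carrier_mat n n"
    and btL: "bt * transpose_mat L = 1\<^sub>m n" and Lbt: "transpose_mat L * bt = 1\<^sub>m n"
    using chol_facts[OF Mc symM pdM] unfolding L_def bt_def by auto
  have LTc: "transpose_mat L \<in> carrier_mat n n" using Lc by simp
  have btTc: "transpose_mat bt \<in> carrier_mat n n" using btc by simp
  have btTL: "transpose_mat bt * L = 1\<^sub>m n"
  proof -
    have "transpose_mat (transpose_mat L * bt) = transpose_mat bt * L"
      using transpose_mult[OF LTc btc] by simp
    then show ?thesis using Lbt by simp
  qed
  define G where "G = bt * transpose_mat bt"
  have Gc: "G \<in> carrier_mat n n" using btc by (simp add: G_def)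
  have GM: "G * M = 1\<^sub>m n"
  proof -
    have LLc: "L * transpose_mat L \<in> carrier_mat n n" using Lc by simp
    have "G * M = bt * (transpose_mat bt * (L * transpose_mat L))"
      unfolding G_def MeqLL using assoc_mult_mat[OF btc btTc LLc] .
    also have "transpose_mat bt * (L * transpose_mat L) = (transpose_mat bt * L) * transpose_mat L"
      using assoc_mult_mat[OF btTc Lc LTc] by simp
    also have "\<dots> = transpose_mat L" using btTL left_mult_one_mat[OF LTc] by simp
    finally show ?thesis using btL by simp
  qed
  have MG: "M * G = 1\<^sub>m n" using mat_mult_left_right_inverse[OF Gc Mc GM] .
  have Ge: "G $$ (j,l) = (\<Sum>k<n. bt $$ (j,k) * bt $$ (l,k))" if "j < n" "l < n" for j l
    unfolding G_def using mult_transpose_entry[OF btc that] .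
  have Gsym: "G $$ (j,l) = G $$ (l,j)" if "j < n" "l < n" for j l
    using Ge that by (simp add: mult.commute)
  have alpha: "(THE \<alpha>. \<alpha> \<in> carrier_vec n \<and> M *\<^sub>v \<alpha> = b) = G *\<^sub>v b" if b: "b \<in> carrier_vec n" for b
  proof (rule the_equality)
    show "G *\<^sub>v b \<in> carrier_vec n \<and> M *\<^sub>v (G *\<^sub>v b) = b"
      using assoc_mult_mat_vec[OF Mc Gc b] MG b Gc by simp
    fix \<alpha> assume a: "\<alpha> \<in> carrier_vec n \<and> M *\<^sub>v \<alpha> = b"
    then have "\<alpha> = (G * M) *\<^sub>v \<alpha>" using GM by simp
    also have "\<dots> = G *\<^sub>v (M *\<^sub>v \<alpha>)" using assoc_mult_mat_vec[OF Gc Mc] a by simp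
    finally show "\<alpha> = G *\<^sub>v b" using a by simp
  qed
  have ri: "reg_interp \<Omega> K xs n lam f
      = (\<lambda>y. \<Sum>j<n. (\<Sum>l<n. G $$ (j,l) * f (xs l)) * kfun \<Omega> K (xs j) y)" for f
  proof -
    have "(THE \<alpha>. \<alpha> \<in> carrier_vec n \<and> M *\<^sub>v \<alpha> = vec n (\<lambda>j. f (xs j))) = G *\<^sub>v vec n (\<lambda>j. f (xs j))"
      by (rule alpha) simp
    then show ?thesis
      unfolding reg_interp_def Let_def M_def[symmetric]
      using mat_vec_entry[OF Gc] by (intro ext sum.cong refl) simp
  qed
  define v where "v k = chol_v \<Omega> K xs n lam k" for k
  have v_eq: "v k = (\<lambda>y. \<Sum>j<n. bt $$ (j,k) * kfun \<Omega> K (xs j) y)" for k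
    unfolding v_def chol_v_def Let_def bt_def L_def M_def by simp
  have kfH: "\<forall>j\<in>{..<n}. kfun \<Omega> K (xs j) \<in> H" using ns_kfun[OF ns] xsO by simp
  have vH: "v k \<in> H" for k
    unfolding v_eq using ns_sum[OF ns finite_lessThan kfH] .
  have vx: "v k x = (\<Sum>l<n. bt $$ (l,k) * K x (xs l))" for k
    unfolding v_eq kfun_def using xO by simp
  define kx where "kx = kfun \<Omega> K x"
  have kxH: "kx \<in> H" unfolding kx_def using ns_kfun[OF ns xO] .
  have kx_xs: "kx (xs l) = K x (xs l)" if "l < n" for l
    unfolding kx_def kfun_def using xsO[OF that] xO symK by simp
  have kf_x: "kfun \<Omega> K (xs j) x = K x (xs j)" for j
    unfolding kfun_def using xO by simp
  define s where "s = reg_interp \<Omega> K xs n lam kx"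
  define a where "a j = (\<Sum>l<n. G $$ (j,l) * K x (xs l))" for j
  have s_a: "s = (\<lambda>y. \<Sum>j<n. a j * kfun \<Omega> K (xs j) y)"
  proof -
    have sa_inner: "(\<Sum>l<n. G $$ (j,l) * kx (xs l)) = a j" for j
      unfolding a_def using kx_xs by (intro sum.cong refl) simp
    show ?thesis unfolding s_def ri sa_inner by simp
  qed
  have s_v: "s = (\<lambda>y. \<Sum>k<n. v k x * v k y)"
  proof
    fix y
    have "s y = (\<Sum>j<n. (\<Sum>l<n. (\<Sum>k<n. bt $$ (j,k) * bt $$ (l,k)) * K x (xs l)) * kfun \<Omega> K (xs j) y)"
    proof -
      have a_eq: "a j = (\<Sum>l<n. (\<Sum>k<n. bt $$ (j,k) * bt $$ (l,k)) * K x (xs l))" if "j < n" for j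
        unfolding a_def using Ge that by (intro sum.cong refl) simp
      show ?thesis unfolding s_a using a_eq by (intro sum.cong refl) simp
    qed
    also have "\<dots> = (\<Sum>k<n. (\<Sum>l<n. bt $$ (l,k) * K x (xs l)) * (\<Sum>j<n. bt $$ (j,k) * kfun \<Omega> K (xs j) y))"
      by (rule triple_sum)
    also have "\<dots> = (\<Sum>k<n. v k x * v k y)" unfolding vx by (simp add: v_eq)
    finally show "s y = (\<Sum>k<n. v k x * v k y)" .
  qed
  have sH: "s \<in> H" unfolding s_a using ns_sum[OF ns finite_lessThan kfH] .
  define g where "g = (\<lambda>y. kx y - s y)"
  have gH: "g \<in> H" unfolding g_def using ns_diff[OF ns kxH sH] .
  have key: "f x - reg_interp \<Omega> K xs n lam f x = ip f g" if f: "f \<in> H" for f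
  proof -
    have "ip f g = ip f kx - ip f s" unfolding g_def using ns_diff_right[OF ns kxH sH f] .
    also have "ip f kx = f x" unfolding kx_def using ns_repr[OF ns f xO] .
    also have "ip f s = ip s f" using ns_sym[OF ns f sH] .
    also have "\<dots> = (\<Sum>j<n. a j * ip (kfun \<Omega> K (xs j)) f)"
      unfolding s_a using ns_sum_left[OF ns finite_lessThan kfH f] .
    also have "\<dots> = (\<Sum>j<n. a j * f (xs j))"
      using ns_repr'[OF ns f] xsO by (intro sum.cong refl) simp
    also have "\<dots> = (\<Sum>j<n. (\<Sum>l<n. G $$ (j,l) * f (xs l)) * K x (xs j))"
      unfolding a_def using swap_sym_sum[of n "\<lambda>j l. G $$ (j,l)" "\<lambda>l. f (xs l)" "\<lambda>l. K x (xs l)"] Gsym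
      by simp
    also have "\<dots> = reg_interp \<Omega> K xs n lam f x" unfolding ri by (simp add: kf_x)
    finally show ?thesis by simp
  qed
  have gg0: "ip g g \<ge> 0" using ns_nonneg[OF ns gH] .
  have hg0: "hnorm ip g \<ge> 0" unfolding hnorm_def using gg0 by simp
  define S where "S = {\<bar>f x - reg_interp \<Omega> K xs n lam f x\<bar> / hnorm ip f | f. f \<in> H \<and> f \<noteq> (\<lambda>y. 0)}"
  have pf: "power_fun \<Omega> K H ip xs n lam x = hnorm ip g"
  proof -
    have "Sup (insert 0 S) = hnorm ip g"
    proof (rule cSup_eq_maximum)
      show "hnorm ip g \<in> insert 0 S"
      proof (cases "g = (\<lambda>y. 0)")
        case True
        then have "hnorm ip g = 0" unfolding hnorm_def using ns_zero_left[OF ns ns_zero[OF ns]] by simp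
        then show ?thesis by simp
      next
        case False
        have "\<bar>g x - reg_interp \<Omega> K xs n lam g x\<bar> / hnorm ip g = \<bar>ip g g\<bar> / sqrt (ip g g)"
          using key[OF gH] by (simp add: hnorm_def)
        also have "\<dots> = hnorm ip g" using gg0
          by (simp add: hnorm_def) (metis abs_of_nonneg real_div_sqrt)
        finally have e: "\<bar>g x - reg_interp \<Omega> K xs n lam g x\<bar> / hnorm ip g = hnorm ip g" .
        have "hnorm ip g \<in> S" unfolding S_def mem_Collect_eq
          by (rule exI[of _ g]) (use e gH False in simp)
        then show ?thesis by simp
      qed
    next
      fix z assume "z \<in> insert 0 S"
      then show "z \<le> hnorm ip g"
      proof
        assume "z = 0" then show ?thesis using hg0 by simp
      next
        assume "z \<in> S"
        then obtain f where f: "f \<in> H" "f \<noteq> (\<lambda>y. 0)"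
          and z: "z = \<bar>f x - reg_interp \<Omega> K xs n lam f x\<bar> / hnorm ip f"
          unfolding S_def by blast
        have fpos: "hnorm ip f > 0" unfolding hnorm_def using ns_pos[OF ns f] by simp
        have "z = \<bar>ip f g\<bar> / hnorm ip f" using z key[OF f(1)] by simp
        also have "\<dots> \<le> hnorm ip f * hnorm ip g / hnorm ip f"
          using ns_cs[OF ns f(1) gH] fpos by (simp add: pos_divide_le_eq mult.commute)
        also have "\<dots> = hnorm ip g" using fpos by simp
        finally show ?thesis .
      qed
    qed
    then show ?thesis unfolding power_fun_def S_def by simp
  qed
  have hg2: "hnorm ip g ^ 2 = ip g g" unfolding hnorm_def using gg0 by simp
  have sx: "s x = (\<Sum>k<n. v k x ^ 2)" unfolding s_v by (simp add: power2_eq_square)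
  have ss: "ip s s = (\<Sum>k<n. \<Sum>l<n. v k x * v l x * ip (v k) (v l))"
  proof -
    have vH': "\<forall>k\<in>{..<n}. v k \<in> H" using vH by simp
    have "ip s s = (\<Sum>k<n. v k x * ip (v k) s)"
      using ns_sum_left[OF ns finite_lessThan vH' sH, of "\<lambda>k. v k x"] s_v by simp
    also have "\<dots> = (\<Sum>k<n. v k x * (\<Sum>l<n. v l x * ip (v k) (v l)))"
    proof (rule sum.cong[OF refl])
      fix k
      show "v k x * ip (v k) s = v k x * (\<Sum>l<n. v l x * ip (v k) (v l))"
        using ns_sum_right[OF ns finite_lessThan vH' vH[of k], of "\<lambda>l. v l x"] s_v by simp
    qed
    also have "\<dots> = (\<Sum>k<n. \<Sum>l<n. v k x * v l x * ip (v k) (v l))"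
      by (simp add: sum_distrib_left mult.assoc)
    finally show ?thesis .
  qed
  have ipgg: "ip g g = K x x - 2 * s x + ip s s"
  proof -
    have "ip g g = ip kx g - ip s g" unfolding g_def using ns_diff_left[OF ns kxH sH gH] by (simp add: g_def)
    also have "ip kx g = ip kx kx - ip kx s" unfolding g_def using ns_diff_right[OF ns kxH sH kxH] .
    also have "ip s g = ip s kx - ip s s" unfolding g_def using ns_diff_right[OF ns kxH sH sH] .
    also have "ip kx kx = K x x" unfolding kx_def using ns_repr[OF ns ns_kfun[OF ns xO] xO] xO
      by (simp add: kfun_def)
    also have "ip s kx = s x" unfolding kx_def using ns_repr[OF ns sH xO] .
    also have "ip kx s = s x" using ns_sym[OF ns kxH sH] \<open>ip s kx = s x\<close> by simp
    finally show ?thesis by simp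
  qed
  have part2: "hnorm ip g ^ 2 = K x x - 2 * (\<Sum>k<n. v k x ^ 2)
      + (\<Sum>k<n. \<Sum>l<n. v k x * v l x * ip (v k) (v l))"
    using hg2 ipgg sx ss by simp
  show ?thesis
    using pf part2 unfolding g_def s_def kx_def v_def by simp
qed

end
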